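(* Let $G$ be an undirected chordal graph with terminals $s,t$, and let $G'$ be the graph obtained from $G$ by deleting every vertex and every edge that lies on no $s$-$t$ path. Let $T^*$ be the set of vertices $x$ of $G'$ for which there exists an edge $(a,b)\in E(G')$ with $x\in N_{G'}(a)\cap N_{G'}(b)$ such that $G'-x$ contains an $s$-$t$ path using the edge $(a,b)$. Then $T^*$ is a minimum-cardinality tracking set for $G$.
   Context: Graphs are simple. A chordal graph is a graph in which every cycle of length greater than three has a chord. An $s$-$t$ path is a simple path from $s$ to $t$. A set $T\subseteq V(G)$ is a tracking set if for any two distinct $s$-$t$ paths $P_1,P_2$, the sequence of vertices of $T\cap V(P_1)$ in the order encountered along $P_1$ differs from the sequence of vertices of $T\cap V(P_2)$ in the order encountered along $P_2$. $N_{H}(v)$ denotes the neighbourhood of $v$ in $H$; $H-x$ denotes the graph with vertex $x$ deleted. *)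

theory Defs
  imports Main
begin

definition simple_graph :: "'a set \<Rightarrow> ('a \<Rightarrow> 'a \<Rightarrow> bool) \<Rightarrow> bool" where
  "simple_graph V E \<longleftrightarrow> finite V \<and> (\<forall>x y. E x y \<longrightarrow> x \<in> V \<and> y \<in> V)
     \<and> (\<forall>x y. E x y \<longrightarrow> E y x) \<and> (\<forall>x. \<not> E x x)"

definition chordal :: "'a set \<Rightarrow> ('a \<Rightarrow> 'a \<Rightarrow> bool) \<Rightarrow> bool" where
  "chordal V E \<longleftrightarrow> (\<forall>c. length c \<ge> 4 \<and> distinct c \<and> set c \<subseteq> V
        \<and> (\<forall>i. Suc i < length c \<longrightarrow> E (c ! i) (c ! Suc i)) \<and> E (last c) (hd c)
      \<longrightarrow> (\<exists>i j. i < length c \<and> j < length c \<and> E (c ! i) (c ! j)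
              \<and> j \<noteq> Suc i mod length c \<and> i \<noteq> Suc j mod length c))"

definition st_path :: "'a set \<Rightarrow> ('a \<Rightarrow> 'a \<Rightarrow> bool) \<Rightarrow> 'a \<Rightarrow> 'a \<Rightarrow> 'a list \<Rightarrow> bool" where
  "st_path V E s t P \<longleftrightarrow> P \<noteq> [] \<and> hd P = s \<and> last P = t \<and> distinct P \<and> set P \<subseteq> V
     \<and> (\<forall>i. Suc i < length P \<longrightarrow> E (P ! i) (P ! Suc i))"

definition tracking_set :: "'a set \<Rightarrow> ('a \<Rightarrow> 'a \<Rightarrow> bool) \<Rightarrow> 'a \<Rightarrow> 'a \<Rightarrow> 'a set \<Rightarrow> bool" where
  "tracking_set V E s t T \<longleftrightarrow> T \<subseteq> V \<and>
     (\<forall>P1 P2. st_path V E s t P1 \<and> st_path V E s t P2 \<and> P1 \<noteq> P2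
        \<longrightarrow> filter (\<lambda>v. v \<in> T) P1 \<noteq> filter (\<lambda>v. v \<in> T) P2)"

definition uses_edge :: "'a list \<Rightarrow> 'a \<Rightarrow> 'a \<Rightarrow> bool" where
  "uses_edge P a b \<longleftrightarrow> (\<exists>i. Suc i < length P \<and>
     ((P ! i = a \<and> P ! Suc i = b) \<or> (P ! i = b \<and> P ! Suc i = a)))"

definition pruned_V :: "'a set \<Rightarrow> ('a \<Rightarrow> 'a \<Rightarrow> bool) \<Rightarrow> 'a \<Rightarrow> 'a \<Rightarrow> 'a set" where
  "pruned_V V E s t = {x. \<exists>P. st_path V E s t P \<and> x \<in> set P}"

definition pruned_E :: "'a set \<Rightarrow> ('a \<Rightarrow> 'a \<Rightarrow> bool) \<Rightarrow> 'a \<Rightarrow> 'a \<Rightarrow> 'a \<Rightarrow> 'a \<Rightarrow> bool" where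
  "pruned_E V E s t a b \<longleftrightarrow> (\<exists>P. st_path V E s t P \<and> uses_edge P a b)"

definition Tstar :: "'a set \<Rightarrow> ('a \<Rightarrow> 'a \<Rightarrow> bool) \<Rightarrow> 'a \<Rightarrow> 'a \<Rightarrow> 'a set" where
  "Tstar V E s t = {x \<in> pruned_V V E s t. \<exists>a b. pruned_E V E s t a b
      \<and> pruned_E V E s t a x \<and> pruned_E V E s t b x
      \<and> (\<exists>P. st_path (pruned_V V E s t - {x})
                (\<lambda>u v. pruned_E V E s t u v \<and> u \<noteq> x \<and> v \<noteq> x) s t P
             \<and> uses_edge P a b)}"

end

theory Submission
  imports Defs
begin


definition walk :: "'a set \<Rightarrow> ('a \<Rightarrow> 'a \<Rightarrow> bool) \<Rightarrow> 'a list \<Rightarrow> bool" where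
  "walk V E L \<longleftrightarrow> distinct L \<and> set L \<subseteq> V \<and> (\<forall>i. Suc i < length L \<longrightarrow> E (L ! i) (L ! Suc i))"

lemma st_path_walk: "st_path V E s t P \<longleftrightarrow> walk V E P \<and> P \<noteq> [] \<and> hd P = s \<and> last P = t"
  unfolding st_path_def walk_def by auto

lemma walk_take: "walk V E L \<Longrightarrow> walk V E (take n L)"
  unfolding walk_def by (auto dest: in_set_takeD)

lemma walk_drop: "walk V E L \<Longrightarrow> walk V E (drop n L)"
  unfolding walk_def by (auto dest: in_set_dropD)

lemma walk_single: "x \<in> V \<Longrightarrow> walk V E [x]"
  unfolding walk_def by auto

lemma walk_append:
  assumes "walk V E X" "walk V E Y" "set X \<inter> set Y = {}"
    "X \<noteq> [] \<Longrightarrow> Y \<noteq> [] \<Longrightarrow> E (last X) (hd Y)"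
  shows "walk V E (X @ Y)"
  unfolding walk_def
proof (intro conjI allI impI)
  show "distinct (X @ Y)" using assms unfolding walk_def by auto
  show "set (X @ Y) \<subseteq> V" using assms unfolding walk_def by auto
  fix i assume i: "Suc i < length (X @ Y)"
  consider "Suc i < length X" | "Suc i = length X" | "Suc i > length X" by linarith
  then show "E ((X @ Y) ! i) ((X @ Y) ! Suc i)"
  proof cases
    case 1 then show ?thesis using assms(1) unfolding walk_def by (auto simp: nth_append)
  next
    case 2
    then have "X \<noteq> []" "Y \<noteq> []" using i by auto
    moreover have "(X @ Y) ! i = last X" using 2 \<open>X \<noteq> []\<close>
      proof -
      have "i = length X - 1" using 2 by simp
      then show ?thesis using 2 \<open>X \<noteq> []\<close> by (simp add: nth_append last_conv_nth)
    qed
    moreover have "(X @ Y) ! Suc i = hd Y" using 2 \<open>Y \<noteq> []\<close>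
      by (simp add: nth_append hd_conv_nth)
    ultimately show ?thesis using assms(4) by simp
  next
    case 3
    then have "Suc (i - length X) < length Y" using i by auto
    then have "E (Y ! (i - length X)) (Y ! Suc (i - length X))" using assms(2) unfolding walk_def by auto
    then show ?thesis using 3 by (simp add: nth_append Suc_diff_le)
  qed
qed

lemma uses_edge_sym: "uses_edge P a b \<longleftrightarrow> uses_edge P b a"
  unfolding uses_edge_def by auto

lemma uses_edge_append: "X \<noteq> [] \<Longrightarrow> Y \<noteq> [] \<Longrightarrow> uses_edge (X @ Y) (last X) (hd Y)"
  unfolding uses_edge_def
  apply (rule exI[of _ "length X - 1"])
  by (auto simp: nth_append last_conv_nth hd_conv_nth)

lemma pruned_E_path:
  assumes "st_path V E s t P" "Suc i < length P"
  shows "pruned_E V E s t (P ! i) (P ! Suc i)" "pruned_E V E s t (P ! Suc i) (P ! i)"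
  using assms unfolding pruned_E_def uses_edge_def by blast+

lemma pruned_E_uses:
  assumes "st_path V E s t P" "uses_edge P a b"
  shows "pruned_E V E s t a b"
  using assms unfolding pruned_E_def by blast

lemma pruned_E_E:
  assumes "simple_graph V E" "pruned_E V E s t a b" shows "E a b"
proof -
  obtain P i where P: "st_path V E s t P" "Suc i < length P"
    "(P ! i = a \<and> P ! Suc i = b) \<or> (P ! i = b \<and> P ! Suc i = a)"
    using assms(2) unfolding pruned_E_def uses_edge_def by blast
  have "E (P ! i) (P ! Suc i)" using P(1,2) unfolding st_path_def by blast
  then show ?thesis using P(3) assms(1) unfolding simple_graph_def by blast
qed

lemma pruned_path:
  assumes "st_path V E s t Q" "x \<notin> set Q"
  shows "st_path (pruned_V V E s t - {x}) (\<lambda>u v. pruned_E V E s t u v \<and> u \<noteq> x \<and> v \<noteq> x) s t Q"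
  using assms unfolding st_path_def
  apply (intro conjI; (simp; fail)?)
  subgoal using assms unfolding pruned_V_def by blast
  subgoal by (metis assms(1) nth_mem pruned_E_path(1) Suc_lessD)
  done

lemma TM:
  assumes "st_path V E s t Q" "x \<notin> set Q" "uses_edge Q a b"
    "pruned_E V E s t a x" "pruned_E V E s t b x"
  shows "x \<in> Tstar V E s t"
proof -
  obtain P i where P: "st_path V E s t P" "Suc i < length P"
    "(P ! i = a \<and> P ! Suc i = x) \<or> (P ! i = x \<and> P ! Suc i = a)"
    using assms(4) unfolding pruned_E_def uses_edge_def by blast
  have "x \<in> set P" using P(2,3) by (metis Suc_lessD nth_mem)
  then have "x \<in> pruned_V V E s t" using P(1) unfolding pruned_V_def by blast
  moreover have "pruned_E V E s t a b" using assms(1,3) by (rule pruned_E_uses)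
  moreover note pruned_path[OF assms(1,2)]
  ultimately show ?thesis unfolding Tstar_def using assms(3-5) by blast
qed



lemma st_splice:
  assumes "walk V E X" "walk V E Y" "X \<noteq> []" "Y \<noteq> []" "hd X = s" "last Y = t"
    "set X \<inter> set Y = {}" "E (last X) (hd Y)"
  shows "st_path V E s t (X @ Y)"
  using walk_append[OF assms(1,2,7)] assms unfolding st_path_walk by auto

lemma st_walk: "st_path V E s t P \<Longrightarrow> walk V E P"
  by (simp add: st_path_walk)

lemma nth_notin_take: "distinct P \<Longrightarrow> j < length P \<Longrightarrow> j \<ge> n \<Longrightarrow> P ! j \<notin> set (take n P)"
  by (auto simp: in_set_conv_nth nth_eq_iff_index_eq)

lemma nth_notin_drop: "distinct P \<Longrightarrow> j < n \<Longrightarrow> P ! j \<notin> set (drop n P)"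
  by (cases "j < length P") (auto simp: in_set_conv_nth nth_eq_iff_index_eq)

lemma L1:
  assumes "st_path V E s t P" "0 < j" "Suc j < length P" "E (P ! (j - 1)) (P ! Suc j)"
  shows "P ! j \<in> Tstar V E s t"
proof -
  let ?X = "take j P" and ?Y = "drop (Suc j) P"
  have d: "distinct P" using assms(1) unfolding st_path_def by simp
  have XY: "?X \<noteq> []" "?Y \<noteq> []" using assms by auto
  have lX: "last ?X = P ! (j - 1)" using assms by (subst last_conv_nth) (auto simp: min_def)
  have hY: "hd ?Y = P ! Suc j" using assms by (simp add: hd_drop_conv_nth)
  have Q: "st_path V E s t (?X @ ?Y)"
    apply (rule st_splice)
    using assms XY lX hY d
    by (auto simp: st_path_walk walk_take walk_drop hd_take set_take_disj_set_drop_if_distinct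
          last_drop)
  have nx: "P ! j \<notin> set (?X @ ?Y)" using d assms nth_notin_take nth_notin_drop by fastforce
  have ue: "uses_edge (?X @ ?Y) (P ! (j - 1)) (P ! Suc j)"
    using uses_edge_append[OF XY] lX hY by simp
  have e1: "pruned_E V E s t (P ! (j - 1)) (P ! j)"
    using pruned_E_path(1)[OF assms(1), of "j - 1"] assms by simp
  have e2: "pruned_E V E s t (P ! Suc j) (P ! j)"
    using pruned_E_path(2)[OF assms(1), of j] assms by simp
  show ?thesis by (rule TM[OF Q nx ue e1 e2])
qed

lemma Tstar_in_tracking:
  assumes sg: "simple_graph V E" and x: "x \<in> Tstar V E s t" and T: "tracking_set V E s t T"
  shows "x \<in> T"
proof (rule ccontr)
  assume nT: "x \<notin> T"
  from x obtain a b P where ab: "pruned_E V E s t a x" "pruned_E V E s t b x"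
    and P: "st_path (pruned_V V E s t - {x}) (\<lambda>u v. pruned_E V E s t u v \<and> u \<noteq> x \<and> v \<noteq> x) s t P"
    and ue: "uses_edge P a b" and xV: "x \<in> pruned_V V E s t"
    unfolding Tstar_def by blast
  have xV': "x \<in> V" using xV unfolding pruned_V_def st_path_def by blast
  have PV: "st_path V E s t P" using P unfolding st_path_def
    using pruned_E_E[OF sg] by (auto simp: pruned_V_def st_path_def)
  have xP: "x \<notin> set P" using P unfolding st_path_def by blast
  obtain i where i: "Suc i < length P" "(P ! i = a \<and> P ! Suc i = b) \<or> (P ! i = b \<and> P ! Suc i = a)"
    using ue unfolding uses_edge_def by blast
  have E1: "E (P ! i) x" and E2: "E x (P ! Suc i)"
    using i ab pruned_E_E[OF sg] sg unfolding simple_graph_def by blast+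
  let ?X = "take (Suc i) P @ [x]" and ?Y = "drop (Suc i) P"
  have d: "distinct P" using PV unfolding st_path_def by simp
  have wX: "walk V E ?X"
    apply (rule walk_append)
    using PV xV' xP E1 i by (auto simp: st_path_walk walk_take walk_single last_conv_nth dest: in_set_takeD)
  have Q: "st_path V E s t (?X @ ?Y)"
    apply (rule st_splice[OF wX])
    using PV i xP E2 d
    by (auto simp: st_path_walk walk_drop hd_take set_take_disj_set_drop_if_distinct hd_drop_conv_nth
          dest: in_set_dropD)
  have "x \<in> set (?X @ ?Y)" by simp
  then have ne: "?X @ ?Y \<noteq> P" using xP by metis
  have "filter (\<lambda>v. v \<in> T) (?X @ ?Y) = filter (\<lambda>v. v \<in> T) (take (Suc i) P) @ filter (\<lambda>v. v \<in> T) ?Y"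
    using nT by simp
  also have "\<dots> = filter (\<lambda>v. v \<in> T) P" by (metis append_take_drop_id filter_append)
  finally have feq: "filter (\<lambda>v. v \<in> T) (?X @ ?Y) = filter (\<lambda>v. v \<in> T) P" .
  have tr: "\<And>P1 P2. st_path V E s t P1 \<Longrightarrow> st_path V E s t P2 \<Longrightarrow> P1 \<noteq> P2 \<Longrightarrow>
     filter (\<lambda>v. v \<in> T) P1 \<noteq> filter (\<lambda>v. v \<in> T) P2"
    using T unfolding tracking_set_def by blast
  show False using tr[OF Q PV ne] feq by contradiction
qed



lemma sg_sym: "simple_graph V E \<Longrightarrow> E a b \<Longrightarrow> E b a"
  unfolding simple_graph_def by blast

lemma sg_irr: "simple_graph V E \<Longrightarrow> \<not> E a a"
  unfolding simple_graph_def by blast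

lemma K:
  assumes sg: "simple_graph V E" and ch: "chordal V E"
  shows "distinct c \<Longrightarrow> length c \<ge> 3 \<Longrightarrow> set c \<subseteq> V
    \<Longrightarrow> (\<forall>i. Suc i < length c \<longrightarrow> E (c ! i) (c ! Suc i)) \<Longrightarrow> E (last c) (hd c)
    \<Longrightarrow> \<exists>i. i + 2 < length c \<and> E (c ! i) (c ! (i + 2))"
proof (induction "length c" arbitrary: c rule: less_induct)
  case less
  show ?case
  proof (cases "length c = 3")
    case True
    have "c \<noteq> []" using True by auto
    then have "last c = c ! 2" "hd c = c ! 0" using True
      by (simp_all add: last_conv_nth hd_conv_nth)
    then have "E (c ! 0) (c ! 2)" using less.prems(5) sg_sym[OF sg] by metis
    then show ?thesis using True by (intro exI[of _ 0]) (simp add: numeral_2_eq_2)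
  next
    case False
    then have l4: "length c \<ge> 4" using less.prems(2) by simp
    have main: "?thesis" if ij: "i < j" "j < length c" "E (c ! i) (c ! j)"
      "j \<noteq> Suc i mod length c" "i \<noteq> Suc j mod length c" for i j
    proof -
      have si: "Suc i mod length c = Suc i" using ij by simp
      then have j2: "j \<ge> i + 2" using ij by simp
      have notfull: "\<not> (i = 0 \<and> j = length c - 1)"
      proof
        assume "i = 0 \<and> j = length c - 1"
        then have "Suc j = length c" using l4 by simp
        then have "Suc j mod length c = 0" by simp
        then show False using ij(5) \<open>i = 0 \<and> j = length c - 1\<close> by simp
      qed
      define c' where "c' = take (j - i + 1) (drop i c)"
      have lc': "length c' = j - i + 1" using ij unfolding c'_def by simp
      have nc': "\<And>r. r < length c' \<Longrightarrow> c' ! r = c ! (i + r)" unfolding c'_def using ij by simp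
      have lt: "length c' < length c" using lc' ij notfull by auto
      have "\<exists>r. r + 2 < length c' \<and> E (c' ! r) (c' ! (r + 2))"
      proof (rule less.hyps[OF lt])
        show "distinct c'" unfolding c'_def using less.prems(1) by simp
        show "3 \<le> length c'" using lc' j2 by simp
        show "set c' \<subseteq> V" unfolding c'_def using less.prems(3) by (auto dest: in_set_takeD in_set_dropD)
        show "\<forall>r. Suc r < length c' \<longrightarrow> E (c' ! r) (c' ! Suc r)"
          using less.prems(4) nc' lc' ij by (auto simp: algebra_simps)
        have "c' \<noteq> []" using lc' by auto
        then have "last c' = c ! j" "hd c' = c ! i"
          using nc' lc' ij by (simp_all add: last_conv_nth hd_conv_nth)
        then show "E (last c') (hd c')" using ij(3) sg_sym[OF sg] by metis
      qed
      then obtain r where r: "r + 2 < length c'" "E (c' ! r) (c' ! (r + 2))" by blast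
      then have "E (c ! (i + r)) (c ! (i + r + 2))" using nc' by (simp add: algebra_simps)
      moreover have "i + r + 2 < length c" using r lt lc' ij by simp
      ultimately show ?thesis by blast
    qed
    obtain i j where ij: "i < length c" "j < length c" "E (c ! i) (c ! j)"
      "j \<noteq> Suc i mod length c" "i \<noteq> Suc j mod length c"
      using ch less.prems l4 unfolding chordal_def by blast
    have "i \<noteq> j" using ij(3) sg_irr[OF sg] by metis
    then consider "i < j" | "j < i" by linarith
    then show ?thesis
    proof cases
      case 1 then show ?thesis using main ij by blast
    next
      case 2 then show ?thesis using main[of j i] ij sg_sym[OF sg] by blast
    qed
  qed
qed



lemma lens:
  fixes p q :: "nat \<Rightarrow> 'a"
  assumes sg: "simple_graph V E" and ch: "chordal V E"
    and n2: "2 \<le> n" and m1: "1 \<le> m" and p0: "p 0 = q 0" and pn: "p n = q m"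
    and pE: "\<forall>i<n. E (p i) (p (Suc i))" and qE: "\<forall>i<m. E (q i) (q (Suc i))"
    and pV: "\<forall>i\<le>n. p i \<in> V" and qV: "\<forall>i\<le>m. q i \<in> V"
    and pinj: "inj_on p {0..n}" and qinj: "inj_on q {0..m}"
    and cross: "\<forall>i j. 0 < i \<and> i < n \<and> j \<le> m \<longrightarrow> p i \<noteq> q j"
    and pcl: "\<forall>i. 0 < i \<and> i < n \<longrightarrow> \<not> E (p (i - 1)) (p (Suc i))"
    and qcl: "\<forall>i. 0 < i \<and> i < m \<longrightarrow> \<not> E (q (i - 1)) (q (Suc i))"
  shows "E (p 1) (q 1)"
proof -
  define f where "f i = (if i \<le> n - 1 then p (n - 1 - i) else q (i - (n - 1)))" for i
  define c where "c = map f [0..<n + m]"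
  have lc: "length c = n + m" unfolding c_def by simp
  have cn: "\<And>i. i < n + m \<Longrightarrow> c ! i = f i" unfolding c_def by simp
  have finj: "inj_on f {0..<n + m}"
  proof (rule inj_onI)
    fix i j assume i: "i \<in> {0..<n + m}" and j: "j \<in> {0..<n + m}" and eq: "f i = f j"
    have mix: False if a: "a \<le> n - 1" "b > n - 1" "b < n + m" "p (n - 1 - a) = q (b - (n - 1))" for a b
    proof (cases "n - 1 - a = 0")
      case True
      then have "q 0 = q (b - (n - 1))" using a p0 by simp
      moreover have "b - (n - 1) \<in> {0..m}" "(0::nat) \<in> {0..m}" using a by auto
      ultimately have "0 = b - (n - 1)" using qinj unfolding inj_on_def by metis
      then show False using a by simp
    next
      case False
      moreover have "n - 1 - a < n" "b - (n - 1) \<le> m" using a n2 by auto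
      ultimately show False using cross a(4) by blast
    qed
    consider "i \<le> n - 1" "j \<le> n - 1" | "i \<le> n - 1" "j > n - 1" | "i > n - 1" "j \<le> n - 1"
      | "i > n - 1" "j > n - 1" by linarith
    then show "i = j"
    proof cases
      case 1
      then have "p (n - 1 - i) = p (n - 1 - j)" using eq unfolding f_def by simp
      moreover have "n - 1 - i \<in> {0..n}" "n - 1 - j \<in> {0..n}" by auto
      ultimately have "n - 1 - i = n - 1 - j" using pinj unfolding inj_on_def by metis
      then show ?thesis using 1 by simp
    next
      case 2 then show ?thesis using mix[of i j] eq j unfolding f_def by simp
    next
      case 3 then show ?thesis using mix[of j i] eq i unfolding f_def by simp
    next
      case 4
      then have "q (i - (n - 1)) = q (j - (n - 1))" using eq unfolding f_def by simp
      moreover have "i - (n - 1) \<in> {0..m}" "j - (n - 1) \<in> {0..m}" using i j n2 by auto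
      ultimately have "i - (n - 1) = j - (n - 1)" using qinj unfolding inj_on_def by metis
      then show ?thesis using 4 by simp
    qed
  qed
  have dc: "distinct c" unfolding c_def using finj by (simp add: distinct_map)
  have fV: "f i \<in> V" if "i < n + m" for i
    using that pV qV unfolding f_def by auto
  have cV: "set c \<subseteq> V" unfolding c_def using fV by auto
  have fE: "E (f i) (f (Suc i))" if "Suc i < n + m" for i
  proof -
    consider "Suc i \<le> n - 1" | "i = n - 1" | "i > n - 1" by linarith
    then show ?thesis
    proof cases
      case 1
      then have "E (p (n - 1 - Suc i)) (p (Suc (n - 1 - Suc i)))" using pE n2 by simp
      moreover have "Suc (n - 1 - Suc i) = n - 1 - i" using 1 by simp
      ultimately show ?thesis using 1 sg_sym[OF sg] unfolding f_def by simp
    next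
      case 2
      then show ?thesis using qE m1 p0 unfolding f_def by simp
    next
      case 3
      then have "E (q (i - (n - 1))) (q (Suc (i - (n - 1))))" using qE that by simp
      moreover have "Suc (i - (n - 1)) = Suc i - (n - 1)" using 3 by simp
      ultimately show ?thesis using 3 unfolding f_def by simp
    qed
  qed
  have cE: "\<forall>i. Suc i < length c \<longrightarrow> E (c ! i) (c ! Suc i)" using fE cn lc by simp
  have "c \<noteq> []" using lc n2 by auto
  then have "last c = f (n + m - 1)" "hd c = f 0" using cn lc n2
    by (simp_all add: last_conv_nth hd_conv_nth)
  moreover have "f (n + m - 1) = q m"
  proof -
    have "\<not> n + m - 1 \<le> n - 1" "n + m - 1 - (n - 1) = m" using n2 m1 by auto
    then show ?thesis unfolding f_def by simp
  qed
  moreover have "f 0 = p (n - 1)" unfolding f_def by simp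
  moreover have "E (p n) (p (n - 1))" proof -
    have "E (p (n - 1)) (p (Suc (n - 1)))" proof -
      have "n - 1 < n" using n2 by simp
      then show ?thesis using pE by blast
    qed
    then show ?thesis using n2 sg_sym[OF sg] by simp
  qed
  ultimately have lh: "E (last c) (hd c)" using pn by simp
  obtain i where i: "i + 2 < length c" "E (c ! i) (c ! (i + 2))"
    using K[OF sg ch dc _ cV cE lh] lc n2 m1 by auto
  have Ei: "E (f i) (f (Suc (Suc i)))" using i cn lc by (simp add: numeral_2_eq_2)
  consider "Suc i < n - 1" | "Suc i = n - 1" | "Suc i > n - 1" by linarith
  then show ?thesis
  proof cases
    case 1
    define r where "r = n - 1 - Suc i"
    have a1: "n - 1 - i = Suc r" "n - 1 - Suc (Suc i) = r - 1" using 1 unfolding r_def by auto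
    have "f i = p (Suc r)" "f (Suc (Suc i)) = p (r - 1)" using 1 a1 unfolding f_def by auto
    moreover have "0 < r" "r < n" using 1 unfolding r_def by auto
    ultimately show ?thesis using pcl Ei sg_sym[OF sg] by metis
  next
    case 2
    then have "f i = p 1" "f (Suc (Suc i)) = q 1" unfolding f_def by auto
    then show ?thesis using Ei by simp
  next
    case 3
    define r where "r = Suc i - (n - 1)"
    have r: "0 < r" "r < m" using 3 i lc unfolding r_def by auto
    have "Suc (Suc i) - (n - 1) = Suc r" using 3 unfolding r_def by auto
    then have "f (Suc (Suc i)) = q (Suc r)" using 3 unfolding f_def by auto
    moreover have "f i = q (r - 1)"
    proof (cases "i = n - 1")
      case True then show ?thesis using p0 unfolding f_def r_def by simp
    next
      case False then show ?thesis using 3 unfolding f_def r_def by auto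
    qed
    ultimately show ?thesis using qcl r Ei by metis
  qed
qed



lemma last_take_Suc: "j < length L \<Longrightarrow> last (take (Suc j) L) = L ! j"
  by (simp add: take_Suc_conv_app_nth)

lemma diverge:
  assumes P1: "st_path V E s t P1" and P2: "st_path V E s t P2" and ne: "P1 \<noteq> P2"
  shows "\<exists>k. Suc k < length P1 \<and> Suc k < length P2 \<and> (\<forall>i\<le>k. P1 ! i = P2 ! i) \<and> P1 ! Suc k \<noteq> P2 ! Suc k"
proof -
  define S where "S = {i. \<not> (i < length P1 \<and> i < length P2 \<and> P1 ! i = P2 ! i)}"
  have "length P1 \<in> S" unfolding S_def by simp
  then have dS: "(LEAST i. i \<in> S) \<in> S" by (rule LeastI)
  define d where "d = (LEAST i. i \<in> S)"
  have below: "\<And>i. i < d \<Longrightarrow> i < length P1 \<and> i < length P2 \<and> P1 ! i = P2 ! i"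
    unfolding d_def S_def using not_less_Least by blast
  have h1: "P1 ! 0 = s" "P2 ! 0 = s" "P1 \<noteq> []" "P2 \<noteq> []" using P1 P2 unfolding st_path_def
    by (auto simp: hd_conv_nth)
  have d0: "d \<noteq> 0"
  proof
    assume "d = 0"
    then have "0 \<in> S" using dS d_def by simp
    then show False using h1 unfolding S_def by simp
  qed
  have inr: "d < length P1 \<and> d < length P2"
  proof (rule ccontr)
    assume nr: "\<not> (d < length P1 \<and> d < length P2)"
    have dl: "d \<le> length P1" "d \<le> length P2" using below[of "d - 1"] d0 by auto
    have l1: "last P1 = P1 ! (length P1 - 1)" "last P2 = P2 ! (length P2 - 1)" using h1
      by (simp_all add: last_conv_nth)
    have lt: "last P1 = t" "last P2 = t" using P1 P2 unfolding st_path_def by auto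
    have dd: "distinct P1" "distinct P2" using P1 P2 unfolding st_path_def by auto
    consider "d = length P1" "d = length P2" | "d = length P1" "d < length P2"
      | "d < length P1" "d = length P2" using nr dl by linarith
    then show False
    proof cases
      case 1
      then have "P1 = P2" using below by (intro nth_equalityI) auto
      then show False using ne by simp
    next
      case 2
      have "P2 ! (d - 1) = t" using below[of "d - 1"] d0 2 l1 lt by simp
      then have "P2 ! (d - 1) = P2 ! (length P2 - 1)" using l1 lt by simp
      then have "d - 1 = length P2 - 1" using dd 2 d0 nth_eq_iff_index_eq by fastforce
      then show False using 2 d0 by arith
    next
      case 3
      have "P1 ! (d - 1) = t" using below[of "d - 1"] d0 3 l1 lt by simp
      then have "P1 ! (d - 1) = P1 ! (length P1 - 1)" using l1 lt by simp
      then have "d - 1 = length P1 - 1" using dd 3 d0 nth_eq_iff_index_eq by fastforce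
      then show False using 3 d0 by arith
    qed
  qed
  moreover have "d \<in> S" using dS d_def by simp
  ultimately have "P1 ! d \<noteq> P2 ! d" unfolding S_def by simp
  moreover have "\<forall>i\<le>d - 1. P1 ! i = P2 ! i" using below d0 by (metis Suc_pred' le_imp_less_Suc not_gr_zero)
  ultimately show ?thesis using inr d0 by (intro exI[of _ "d - 1"]) simp
qed

lemma TRI:
  assumes sg: "simple_graph V E" and P: "st_path V E s t P" and Q: "st_path V E s t Q"
    and pre: "\<forall>i\<le>k. P ! i = Q ! i" and kP: "Suc k < length P" and kQ: "Suc k < length Q"
    and ne: "P ! Suc k \<noteq> Q ! Suc k" and ab: "E (P ! Suc k) (Q ! Suc k)"
  shows "P ! Suc k \<notin> set Q \<Longrightarrow> P ! Suc k \<in> Tstar V E s t"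
    and "P ! Suc k \<in> set Q \<Longrightarrow> Q ! Suc k \<in> Tstar V E s t"
proof -
  have dP: "distinct P" and dQ: "distinct Q" using P Q unfolding st_path_def by auto
  have wP: "walk V E P" and wQ: "walk V E Q" using P Q by (auto simp: st_path_walk)
  have hP: "hd P = s" "P \<noteq> []" and lQ: "last Q = t" using P Q unfolding st_path_def by auto
  have uk: "P ! k = Q ! k" using pre by simp
  {
    assume na: "P ! Suc k \<notin> set Q"
    let ?X = "take (Suc (Suc k)) P" and ?Y = "drop (Suc k) Q"
    have XY: "?X \<noteq> []" "?Y \<noteq> []" using kP kQ by auto
    have lX: "last ?X = P ! Suc k" using kP by (rule last_take_Suc)
    have hY: "hd ?Y = Q ! Suc k" using kQ by (simp add: hd_drop_conv_nth)
    have disj: "set ?X \<inter> set ?Y = {}"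
    proof (rule ccontr)
      assume "set ?X \<inter> set ?Y \<noteq> {}"
      then obtain x where x: "x \<in> set ?X" "x \<in> set ?Y" by blast
      then obtain i where i: "i < Suc (Suc k)" "i < length P" "x = P ! i"
        by (auto simp: in_set_conv_nth)
      show False
      proof (cases "i \<le> k")
        case True
        then have "x = Q ! i" using pre i by simp
        then show False using x(2) nth_notin_drop[OF dQ, of i "Suc k"] True by simp
      next
        case False
        then have "x = P ! Suc k" using i by (simp add: less_Suc_eq)
        then show False using na x(2) by (auto dest: in_set_dropD)
      qed
    qed
    have W: "st_path V E s t (?X @ ?Y)"
      apply (rule st_splice[OF walk_take[OF wP] walk_drop[OF wQ] XY])
      using hP lQ disj ab lX hY kQ by (auto simp: hd_take last_drop)
    have ue: "uses_edge (?X @ ?Y) (P ! Suc k) (Q ! Suc k)"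
      using uses_edge_append[OF XY] lX hY by simp
    have "uses_edge (?X @ ?Y) (Q ! Suc k) (P ! Suc k)" using ue by (simp add: uses_edge_sym)
    then have e2: "pruned_E V E s t (Q ! Suc k) (P ! Suc k)" by (rule pruned_E_uses[OF W])
    have e1: "pruned_E V E s t (Q ! k) (P ! Suc k)"
      using pruned_E_path(1)[OF P, of k] kP uk by simp
    have ue2: "uses_edge Q (Q ! k) (Q ! Suc k)" using kQ unfolding uses_edge_def by blast
    show "P ! Suc k \<in> Tstar V E s t" by (rule TM[OF Q na ue2 e1 e2])
  }
  {
    assume ia: "P ! Suc k \<in> set Q"
    then obtain j where j: "j < length Q" "Q ! j = P ! Suc k" by (auto simp: in_set_conv_nth)
    have jk: "Suc k < j"
    proof (rule ccontr)
      assume "\<not> Suc k < j"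
      moreover have "j \<noteq> Suc k" using j ne by auto
      ultimately have "j \<le> k" by simp
      then have "P ! j = P ! Suc k" using pre j by simp
      then have "j = Suc k" using dP kP \<open>j \<le> k\<close> nth_eq_iff_index_eq by fastforce
      then show False using \<open>j \<le> k\<close> by simp
    qed
    let ?X = "take (Suc k) Q" and ?X2 = "take (Suc (Suc k)) Q" and ?Y = "drop j Q"
    have XY: "?X \<noteq> []" "?X2 \<noteq> []" "?Y \<noteq> []" using kQ j by auto
    have lX: "last ?X = Q ! k" using kQ by (intro last_take_Suc) simp
    have lX2: "last ?X2 = Q ! Suc k" using kQ by (rule last_take_Suc)
    have hY: "hd ?Y = Q ! j" using j by (simp add: hd_drop_conv_nth)
    have hQ: "hd Q = s" "Q \<noteq> []" using Q unfolding st_path_def by auto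
    have Ek: "E (Q ! k) (P ! Suc k)"
    proof -
      have "E (P ! k) (P ! Suc k)" using P kP unfolding st_path_def by blast
      then show ?thesis using uk by simp
    qed
    have W1: "st_path V E s t (?X @ ?Y)"
      apply (rule st_splice[OF walk_take[OF wQ] walk_drop[OF wQ] XY(1,3)])
      using hQ lQ j jk lX hY Ek dQ
      by (auto simp: hd_take last_drop set_take_disj_set_drop_if_distinct)
    have W2: "st_path V E s t (?X2 @ ?Y)"
      apply (rule st_splice[OF walk_take[OF wQ] walk_drop[OF wQ] XY(2,3)])
      using hQ lQ j jk lX2 hY ab dQ sg_sym[OF sg]
      by (auto simp: hd_take last_drop set_take_disj_set_drop_if_distinct)
    have nb: "Q ! Suc k \<notin> set (?X @ ?Y)"
      using nth_notin_take[OF dQ kQ, of "Suc k"] nth_notin_drop[OF dQ jk] by simp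
    have ue: "uses_edge (?X @ ?Y) (Q ! k) (Q ! j)"
      using uses_edge_append[OF XY(1,3)] lX hY by simp
    have ue2: "uses_edge (?X2 @ ?Y) (Q ! Suc k) (Q ! j)"
      using uses_edge_append[OF XY(2,3)] lX2 hY by simp
    have e1: "pruned_E V E s t (Q ! k) (Q ! Suc k)" using pruned_E_path(1)[OF Q, of k] kQ by simp
    have "uses_edge (?X2 @ ?Y) (Q ! j) (Q ! Suc k)" using ue2 by (simp add: uses_edge_sym)
    then have e2: "pruned_E V E s t (Q ! j) (Q ! Suc k)" by (rule pruned_E_uses[OF W2])
    show "Q ! Suc k \<in> Tstar V E s t" by (rule TM[OF W1 nb ue e1 e2])
  }
qed



lemma noTri:
  assumes sg: "simple_graph V E" and P1: "st_path V E s t P1" and P2: "st_path V E s t P2"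
    and pre: "\<forall>i\<le>k. P1 ! i = P2 ! i" and k1: "Suc k < length P1" and k2: "Suc k < length P2"
    and ne: "P1 ! Suc k \<noteq> P2 ! Suc k" and ab: "E (P1 ! Suc k) (P2 ! Suc k)"
    and feq: "filter (\<lambda>v. v \<in> Tstar V E s t) P1 = filter (\<lambda>v. v \<in> Tstar V E s t) P2"
  shows False
proof -
  let ?F = "\<lambda>v. v \<in> Tstar V E s t"
  have tk: "take (Suc k) P1 = take (Suc k) P2"
    by (rule nth_equalityI) (use pre k1 k2 in auto)
  have "filter ?F (take (Suc k) P1) @ filter ?F (drop (Suc k) P1)
      = filter ?F (take (Suc k) P2) @ filter ?F (drop (Suc k) P2)"
    using feq by (metis append_take_drop_id filter_append)
  then have fd: "filter ?F (drop (Suc k) P1) = filter ?F (drop (Suc k) P2)" using tk by simp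
  have d1: "drop (Suc k) P1 = P1 ! Suc k # drop (Suc (Suc k)) P1" using k1 by (simp add: Cons_nth_drop_Suc)
  have d2: "drop (Suc k) P2 = P2 ! Suc k # drop (Suc (Suc k)) P2" using k2 by (simp add: Cons_nth_drop_Suc)
  have memA: "P1 ! Suc k \<in> set P2" if "P1 ! Suc k \<in> Tstar V E s t"
  proof -
    have "P1 ! Suc k \<in> set (filter ?F (drop (Suc k) P2))" using fd d1 that by (metis filter.simps(2) list.set_intros(1))
    then show ?thesis by (auto dest: in_set_dropD)
  qed
  have memB: "P2 ! Suc k \<in> set P1" if "P2 ! Suc k \<in> Tstar V E s t"
  proof -
    have "P2 ! Suc k \<in> set (filter ?F (drop (Suc k) P1))" using fd d2 that by (metis filter.simps(2) list.set_intros(1))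
    then show ?thesis by (auto dest: in_set_dropD)
  qed
  have both: False if "P1 ! Suc k \<in> Tstar V E s t" "P2 ! Suc k \<in> Tstar V E s t"
    using fd d1 d2 that ne by simp
  have pre': "\<forall>i\<le>k. P2 ! i = P1 ! i" using pre by simp
  have ab': "E (P2 ! Suc k) (P1 ! Suc k)" using ab sg_sym[OF sg] by blast
  note T1 = TRI[OF sg P1 P2 pre k1 k2 ne ab]
  note T2 = TRI[OF sg P2 P1 pre' k2 k1 ne[symmetric] ab']
  show False
  proof (cases "P1 ! Suc k \<in> set P2")
    case False
    then show False using T1(1) memA by blast
  next
    case True
    then have b: "P2 ! Suc k \<in> Tstar V E s t" using T1(2) by blast
    then have "P2 ! Suc k \<in> set P1" using memB by blast
    then have "P1 ! Suc k \<in> Tstar V E s t" using T2(2) by blast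
    then show False using both b by blast
  qed
qed



lemma lens_lists:
  assumes sg: "simple_graph V E" and ch: "chordal V E"
    and P: "st_path V E s t P" and Q: "st_path V E s t Q"
    and ip: "Suc k < ip" "ip < length P" and iq: "k < iq" "iq < length Q"
    and e0: "P ! k = Q ! k" and e1: "P ! ip = Q ! iq"
    and cross: "\<forall>i j. k < i \<and> i < ip \<and> k \<le> j \<and> j \<le> iq \<longrightarrow> P ! i \<noteq> Q ! j"
    and clP: "\<forall>i. k < i \<and> i < ip \<longrightarrow> \<not> E (P ! (i - 1)) (P ! Suc i)"
    and clQ: "\<forall>i. k < i \<and> i < iq \<longrightarrow> \<not> E (Q ! (i - 1)) (Q ! Suc i)"
  shows "E (P ! Suc k) (Q ! Suc k)"
proof -
  define p where "p i = P ! (k + i)" for i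
  define q where "q i = Q ! (k + i)" for i
  have dP: "distinct P" and dQ: "distinct Q" using P Q unfolding st_path_def by auto
  have EP: "\<And>i. Suc i < length P \<Longrightarrow> E (P ! i) (P ! Suc i)" using P unfolding st_path_def by blast
  have EQ: "\<And>i. Suc i < length Q \<Longrightarrow> E (Q ! i) (Q ! Suc i)" using Q unfolding st_path_def by blast
  have VP: "set P \<subseteq> V" and VQ: "set Q \<subseteq> V" using P Q unfolding st_path_def by auto
  have "E (p 1) (q 1)"
  proof (rule lens[OF sg ch, of "ip - k" "iq - k"])
    show "2 \<le> ip - k" "1 \<le> iq - k" using ip iq by auto
    show "p 0 = q 0" "p (ip - k) = q (iq - k)" using e0 e1 ip iq unfolding p_def q_def by auto
    show "\<forall>i<ip - k. E (p i) (p (Suc i))" using EP ip unfolding p_def by auto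
    show "\<forall>i<iq - k. E (q i) (q (Suc i))" using EQ iq unfolding q_def by auto
    show "\<forall>i\<le>ip - k. p i \<in> V" using VP ip unfolding p_def by auto
    show "\<forall>i\<le>iq - k. q i \<in> V" using VQ iq unfolding q_def by auto
    show "inj_on p {0..ip - k}" unfolding p_def using dP ip
      by (auto simp: inj_on_def nth_eq_iff_index_eq)
    show "inj_on q {0..iq - k}" unfolding q_def using dQ iq
      by (auto simp: inj_on_def nth_eq_iff_index_eq)
    show "\<forall>i j. 0 < i \<and> i < ip - k \<and> j \<le> iq - k \<longrightarrow> p i \<noteq> q j"
    proof (intro allI impI)
      fix i j assume a: "0 < i \<and> i < ip - k \<and> j \<le> iq - k"
      then have "k < k + i" "k + i < ip" "k \<le> k + j" "k + j \<le> iq" using ip iq by auto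
      then show "p i \<noteq> q j" using cross unfolding p_def q_def by blast
    qed
    show "\<forall>i. 0 < i \<and> i < ip - k \<longrightarrow> \<not> E (p (i - 1)) (p (Suc i))"
    proof (intro allI impI)
      fix i assume i: "0 < i \<and> i < ip - k"
      have a: "k + (i - 1) = k + i - 1" "k + Suc i = Suc (k + i)" "k < k + i" "k + i < ip" using i by auto
      have "\<not> E (P ! (k + i - 1)) (P ! Suc (k + i))" using clP a(3,4) by blast
      then show "\<not> E (p (i - 1)) (p (Suc i))" unfolding p_def a(1,2) .
    qed
    show "\<forall>i. 0 < i \<and> i < iq - k \<longrightarrow> \<not> E (q (i - 1)) (q (Suc i))"
    proof (intro allI impI)
      fix i assume i: "0 < i \<and> i < iq - k"
      have a: "k + (i - 1) = k + i - 1" "k + Suc i = Suc (k + i)" "k < k + i" "k + i < iq" using i by auto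
      have "\<not> E (Q ! (k + i - 1)) (Q ! Suc (k + i))" using clQ a(3,4) by blast
      then show "\<not> E (q (i - 1)) (q (Suc i))" unfolding q_def a(1,2) .
    qed
  qed
  then show ?thesis unfolding p_def q_def by simp
qed

lemma Mk:
  fixes F :: "'a \<Rightarrow> bool"
  assumes d: "distinct D" and ne: "D \<noteq> []" and l: "last D = t"
  defines "j \<equiv> length (takeWhile (\<lambda>v. \<not> (F v \<or> v = t)) D)"
  shows "j < length D" "\<forall>i<j. \<not> F (D ! i)"
    "D ! j = (case filter F D of [] \<Rightarrow> t | y # _ \<Rightarrow> y)"
proof -
  let ?G = "\<lambda>v. \<not> (F v \<or> v = t)"
  have tD: "t \<in> set D" using ne l by auto
  have "length (takeWhile ?G D) \<noteq> length D"
  proof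
    assume "length (takeWhile ?G D) = length D"
    then have "takeWhile ?G D = D" by (metis takeWhile_eq_take take_all order_refl)
    then have "t \<in> set (takeWhile ?G D)" using tD by (subst \<open>takeWhile ?G D = D\<close>)
    then show False by (auto dest: set_takeWhileD)
  qed
  then show jl: "j < length D" unfolding j_def using length_takeWhile_le[of ?G D] by linarith
  have pre: "\<forall>i<j. ?G (D ! i)"
  proof (intro allI impI)
    fix i assume "i < j"
    then have i: "i < length (takeWhile ?G D)" unfolding j_def .
    have "takeWhile ?G D ! i \<in> set (takeWhile ?G D)" by (rule nth_mem[OF i])
    then have "D ! i \<in> set (takeWhile ?G D)" by (metis takeWhile_nth[OF i])
    then have "D ! i \<in> set D \<and> ?G (D ! i)" by (rule set_takeWhileD)
    then show "?G (D ! i)" by (rule conjunct2)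
  qed
  then show "\<forall>i<j. \<not> F (D ! i)" by blast
  have nj: "\<not> ?G (D ! j)" unfolding j_def using jl j_def nth_length_takeWhile by blast
  have tw: "take j D = takeWhile ?G D" unfolding j_def by (metis takeWhile_eq_take)
  have ft: "filter F (take j D) = []" unfolding tw
    by (auto simp: filter_empty_conv dest: set_takeWhileD)
  have dd: "drop j D = D ! j # drop (Suc j) D" using jl by (simp add: Cons_nth_drop_Suc)
  have fD: "filter F D = filter F (D ! j # drop (Suc j) D)"
    using ft dd by (metis append_Nil append_take_drop_id filter_append)
  show "D ! j = (case filter F D of [] \<Rightarrow> t | y # _ \<Rightarrow> y)"
  proof (cases "F (D ! j)")
    case True then show ?thesis using fD by simp
  next
    case False
    then have Dj: "D ! j = t" using nj by simp
    have "D ! (length D - 1) = t" using l ne by (simp add: last_conv_nth)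
    then have "j = length D - 1" using Dj d jl nth_eq_iff_index_eq by fastforce
    then have "drop (Suc j) D = []" by simp
    then show ?thesis using fD False Dj by simp
  qed
qed



lemma tracks:
  assumes sg: "simple_graph V E" and ch: "chordal V E"
    and P1: "st_path V E s t P1" and P2: "st_path V E s t P2" and ne: "P1 \<noteq> P2"
    and feq: "filter (\<lambda>v. v \<in> Tstar V E s t) P1 = filter (\<lambda>v. v \<in> Tstar V E s t) P2"
  shows False
proof -
  let ?F = "\<lambda>v. v \<in> Tstar V E s t"
  obtain k where k1: "Suc k < length P1" and k2: "Suc k < length P2"
    and pre: "\<forall>i\<le>k. P1 ! i = P2 ! i" and nek: "P1 ! Suc k \<noteq> P2 ! Suc k"
    using diverge[OF P1 P2 ne] by blast
  have dP1: "distinct P1" and dP2: "distinct P2" using P1 P2 unfolding st_path_def by auto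
  have lP1: "last P1 = t" and lP2: "last P2 = t" using P1 P2 unfolding st_path_def by auto
  have tk: "take (Suc k) P1 = take (Suc k) P2"
    by (rule nth_equalityI) (use pre k1 k2 in auto)
  have "filter ?F (take (Suc k) P1) @ filter ?F (drop (Suc k) P1)
      = filter ?F (take (Suc k) P2) @ filter ?F (drop (Suc k) P2)"
    using feq by (metis append_take_drop_id filter_append)
  then have fd: "filter ?F (drop (Suc k) P1) = filter ?F (drop (Suc k) P2)" using tk by simp
  define D1 where "D1 = drop (Suc k) P1"
  define D2 where "D2 = drop (Suc k) P2"
  have D1: "distinct D1" "D1 \<noteq> []" "last D1 = t" unfolding D1_def using dP1 k1 lP1 by (auto simp: last_drop)
  have D2: "distinct D2" "D2 \<noteq> []" "last D2 = t" unfolding D2_def using dP2 k2 lP2 by (auto simp: last_drop)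
  define j1 where "j1 = length (takeWhile (\<lambda>v. \<not> (?F v \<or> v = t)) D1)"
  define j2 where "j2 = length (takeWhile (\<lambda>v. \<not> (?F v \<or> v = t)) D2)"
  note M1 = Mk[OF D1, of ?F, folded j1_def]
  note M2 = Mk[OF D2, of ?F, folded j2_def]
  have mk: "D1 ! j1 = D2 ! j2" using M1(3) M2(3) fd unfolding D1_def D2_def by simp
  define J1 where "J1 = Suc k + j1"
  define J2 where "J2 = Suc k + j2"
  have J1l: "J1 < length P1" using M1(1) unfolding J1_def D1_def by simp
  have J2l: "J2 < length P2" using M2(1) unfolding J2_def D2_def by simp
  have J12: "P1 ! J1 = P2 ! J2" using mk k1 k2 unfolding J1_def J2_def D1_def D2_def by simp
  have free1: "P1 ! i \<notin> Tstar V E s t" if "k < i" "i < J1" for i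
  proof -
    have "i - Suc k < j1" "D1 ! (i - Suc k) = P1 ! i" using that k1 unfolding J1_def D1_def by auto
    then show ?thesis using M1(2) by metis
  qed
  have free2: "P2 ! i \<notin> Tstar V E s t" if "k < i" "i < J2" for i
  proof -
    have "i - Suc k < j2" "D2 ! (i - Suc k) = P2 ! i" using that k2 unfolding J2_def D2_def by auto
    then show ?thesis using M2(2) by metis
  qed
  define S where "S = {i. k < i \<and> i \<le> J1 \<and> (\<exists>j. k < j \<and> j \<le> J2 \<and> P1 ! i = P2 ! j)}"
  have "k < J2" "J2 \<le> J2" unfolding J2_def by auto
  then have "J1 \<in> S" unfolding S_def using J12 by (auto simp: J1_def)
  then have "(LEAST i. i \<in> S) \<in> S" by (rule LeastI)
  define iw where "iw = (LEAST i. i \<in> S)"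
  have iwS: "iw \<in> S" using \<open>(LEAST i. i \<in> S) \<in> S\<close> iw_def by simp
  have minS: "\<And>i. i < iw \<Longrightarrow> i \<notin> S" unfolding iw_def by (rule not_less_Least)
  obtain jw where iw: "k < iw" "iw \<le> J1" and jw: "k < jw" "jw \<le> J2" "P1 ! iw = P2 ! jw"
    using iwS unfolding S_def by blast
  have cross1: "\<forall>i j. k < i \<and> i < iw \<and> k \<le> j \<and> j \<le> jw \<longrightarrow> P1 ! i \<noteq> P2 ! j"
  proof (intro allI impI)
    fix i j assume a: "k < i \<and> i < iw \<and> k \<le> j \<and> j \<le> jw"
    show "P1 ! i \<noteq> P2 ! j"
    proof (cases "j = k")
      case True
      then have "P2 ! j = P1 ! k" using pre by simp
      moreover have "P1 ! i \<noteq> P1 ! k" using dP1 a iw J1l nth_eq_iff_index_eq by fastforce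
      ultimately show ?thesis by simp
    next
      case False
      then have "k < j" "j \<le> J2" using a jw by auto
      moreover have "i \<notin> S" using minS a by blast
      ultimately show ?thesis unfolding S_def using a iw by auto
    qed
  qed
  have cross2: "\<forall>i j. k < i \<and> i < jw \<and> k \<le> j \<and> j \<le> iw \<longrightarrow> P2 ! i \<noteq> P1 ! j"
  proof (intro allI impI)
    fix i j assume a: "k < i \<and> i < jw \<and> k \<le> j \<and> j \<le> iw"
    consider "j = iw" | "j = k" | "k < j" "j < iw" using a by linarith
    then show "P2 ! i \<noteq> P1 ! j"
    proof cases
      case 1
      have "P2 ! i \<noteq> P2 ! jw" using dP2 a jw J2l nth_eq_iff_index_eq by fastforce
      then show ?thesis using 1 jw by simp
    next
      case 2
      have "P2 ! i \<noteq> P2 ! k" using dP2 a jw J2l nth_eq_iff_index_eq by fastforce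
      then show ?thesis using 2 pre by simp
    next
      case 3
      then show ?thesis using cross1 a by (metis less_imp_le)
    qed
  qed
  have cl1: "\<forall>i. k < i \<and> i < iw \<longrightarrow> \<not> E (P1 ! (i - 1)) (P1 ! Suc i)"
  proof (intro allI impI notI)
    fix i assume a: "k < i \<and> i < iw" and e: "E (P1 ! (i - 1)) (P1 ! Suc i)"
    have "P1 ! i \<in> Tstar V E s t" using L1[OF P1 _ _ e] a iw J1l by simp
    then show False using free1 a iw by simp
  qed
  have cl2: "\<forall>i. k < i \<and> i < jw \<longrightarrow> \<not> E (P2 ! (i - 1)) (P2 ! Suc i)"
  proof (intro allI impI notI)
    fix i assume a: "k < i \<and> i < jw" and e: "E (P2 ! (i - 1)) (P2 ! Suc i)"
    have "P2 ! i \<in> Tstar V E s t" using L1[OF P2 _ _ e] a jw J2l by simp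
    then show False using free2 a jw by simp
  qed
  have e0: "P1 ! k = P2 ! k" using pre by simp
  have ab: "E (P1 ! Suc k) (P2 ! Suc k)"
  proof (cases "Suc k < iw")
    case True
    show ?thesis
      by (rule lens_lists[OF sg ch P1 P2 True _ jw(1) _ e0 jw(3) cross1 cl1 cl2])
        (use iw J1l jw J2l in auto)
  next
    case False
    then have iwk: "iw = Suc k" using iw by simp
    have "jw \<noteq> Suc k" using iwk jw nek by auto
    then have jk: "Suc k < jw" using jw by simp
    have "E (P2 ! Suc k) (P1 ! Suc k)"
      by (rule lens_lists[OF sg ch P2 P1 jk _ iw(1) _ e0[symmetric] jw(3)[symmetric] cross2 cl2 cl1])
        (use iw J1l jw J2l in auto)
    then show ?thesis using sg_sym[OF sg] by blast
  qed
  show False by (rule noTri[OF sg P1 P2 pre k1 k2 nek ab feq])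
qed


theorem mainTheorem2:
  fixes V :: "'a set" and E :: "'a \<Rightarrow> 'a \<Rightarrow> bool" and s t :: 'a
  assumes "simple_graph V E" and "chordal V E" and "s \<in> V" and "t \<in> V"
  shows "tracking_set V E s t (Tstar V E s t) \<and>
         (\<forall>T. tracking_set V E s t T \<longrightarrow> card (Tstar V E s t) \<le> card T)"
proof
  have TV: "Tstar V E s t \<subseteq> V"
  proof
    fix x assume "x \<in> Tstar V E s t"
    then have "x \<in> pruned_V V E s t" unfolding Tstar_def by blast
    then obtain P where "st_path V E s t P" "x \<in> set P" unfolding pruned_V_def by blast
    then show "x \<in> V" unfolding st_path_def by blast
  qed
  show "tracking_set V E s t (Tstar V E s t)"
    unfolding tracking_set_def using TV tracks[OF assms(1,2)] by blast
  show "\<forall>T. tracking_set V E s t T \<longrightarrow> card (Tstar V E s t) \<le> card T"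
  proof (intro allI impI)
    fix T assume T: "tracking_set V E s t T"
    have fin: "finite T" using T assms(1) unfolding tracking_set_def simple_graph_def
      by (meson finite_subset)
    have "Tstar V E s t \<subseteq> T" using Tstar_in_tracking[OF assms(1) _ T] by blast
    then show "card (Tstar V E s t) \<le> card T" using fin by (rule card_mono[rotated])
  qed
qed

end
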